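(* Let $n\ge 3$, let $A=(a_{ij})_{1\le i,j\le n}$ be a real $n\times n$ matrix, let $\pi$ be uniformly distributed over the symmetric group $S_n$, and let $Y=\sum_{i=1}^n a_{i\pi(i)}$. Set $a_{i\cdot}=\frac1n\sum_{j=1}^n a_{ij}$, $a_{\cdot j}=\frac1n\sum_{i=1}^n a_{ij}$, $a_{\cdot\cdot}=\frac1{n^2}\sum_{i,j=1}^n a_{ij}$, $\mu_A=na_{\cdot\cdot}$ (the mean of $Y$), $$\sigma_A^2=\frac{1}{n-1}\sum_{1\le i,j\le n}(a_{ij}-a_{i\cdot}-a_{\cdot j}+a_{\cdot\cdot})^2$$ (the variance of $Y$), assumed nonzero, $\|a\|=\max_{1\le i,j\le n}|a_{ij}-a_{i\cdot}|$ and $c=8\|a\|$. Then for every $t\ge 0$, $$\max\{\mathbb{P}(Y-\mu_A\ge t),\mathbb{P}(Y-\mu_A\le -t)\}\le \exp\left(-\frac{t^2}{2(\sigma_A^2+ct)}\right)\quad\text{and}\quad \max\{\mathbb{P}(Y-\mu_A\ge t),\mathbb{P}(Y-\mu_A\le -t)\}\le \exp\left(-\frac{t^2}{10\sigma_A^2/3+ct}\right),$$ and for every $t>e$, $$\max\{\mathbb{P}(Y-\mu_A\ge t),\mathbb{P}(Y-\mu_A\le -t)\}\le \exp\left(-\frac{t}{c}\left(\log t-\log\log t-\frac{\sigma_A^2}{c}\right)\right)\le\exp\left(-\frac{t}{2c}\left(\log t-\frac{2\sigma_A^2}{c}\right)\right).$$ *)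

theory Defs
  imports "HOL-Probability.Probability"
begin

definition row_mean :: "nat \<Rightarrow> (nat \<Rightarrow> nat \<Rightarrow> real) \<Rightarrow> nat \<Rightarrow> real" where
  "row_mean n a i = (\<Sum>j=1..n. a i j) / real n"

definition col_mean :: "nat \<Rightarrow> (nat \<Rightarrow> nat \<Rightarrow> real) \<Rightarrow> nat \<Rightarrow> real" where
  "col_mean n a j = (\<Sum>i=1..n. a i j) / real n"

definition tot_mean :: "nat \<Rightarrow> (nat \<Rightarrow> nat \<Rightarrow> real) \<Rightarrow> real" where
  "tot_mean n a = (\<Sum>i=1..n. \<Sum>j=1..n. a i j) / (real n)^2"

definition mu_A :: "nat \<Rightarrow> (nat \<Rightarrow> nat \<Rightarrow> real) \<Rightarrow> real" where
  "mu_A n a = real n * tot_mean n a"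

definition sigma2_A :: "nat \<Rightarrow> (nat \<Rightarrow> nat \<Rightarrow> real) \<Rightarrow> real" where
  "sigma2_A n a = (\<Sum>i=1..n. \<Sum>j=1..n.
      (a i j - row_mean n a i - col_mean n a j + tot_mean n a)^2) / (real n - 1)"

definition norm_A :: "nat \<Rightarrow> (nat \<Rightarrow> nat \<Rightarrow> real) \<Rightarrow> real" where
  "norm_A n a = Max {\<bar>a i j - row_mean n a i\<bar> | i j. i \<in> {1..n} \<and> j \<in> {1..n}}"

definition perm_stat :: "nat \<Rightarrow> (nat \<Rightarrow> nat \<Rightarrow> real) \<Rightarrow> (nat \<Rightarrow> nat) \<Rightarrow> real" where
  "perm_stat n a \<pi> = (\<Sum>i=1..n. a i (\<pi> i))"

definition unif_perm :: "nat \<Rightarrow> (nat \<Rightarrow> nat) pmf" where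
  "unif_perm n = pmf_of_set {\<pi>. \<pi> permutes {1..n}}"

end

theory Submission
  imports Defs
begin

lemma exp_le_inv: "(y::real) < 1 \<Longrightarrow> exp y \<le> 1 / (1 - y)"
proof -
  assume y: "y < 1"
  have "1 - y \<le> exp (- y)" using exp_ge_add_one_self[of "-y"] by simp
  hence "(1 - y) * exp y \<le> exp (-y) * exp y" by (simp add: mult_right_mono)
  hence "(1 - y) * exp y \<le> 1" by (simp add: exp_minus)
  thus ?thesis using y by (simp add: pos_le_divide_eq mult.commute)
qed

lemma L1: assumes "0 \<le> (x::real)" "x < 1" shows "exp x * (x - 1) + 1 \<le> x^2 / (2 * (1 - x))"
proof -
  let ?f = "\<lambda>x::real. x^2 / (2 * (1 - x)) - (exp x * (x - 1) + 1)"
  have "?f 0 \<le> ?f x"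
  proof (rule DERIV_nonneg_imp_nondecreasing[OF assms(1)])
    fix y assume y: "0 \<le> y" "y \<le> x"
    hence y1: "y < 1" using assms by simp
    have d1: "DERIV (\<lambda>x. x^2) y :> 2*y" by (auto intro!: derivative_eq_intros)
    have d2: "DERIV (\<lambda>x::real. 2 * (1 - x)) y :> -2" by (auto intro!: derivative_eq_intros)
    have d3: "DERIV (\<lambda>x::real. x^2 / (2 * (1 - x))) y :> (2*y * (2*(1-y)) - y^2 * (-2)) / ((2*(1-y)) * (2*(1-y)))"
      using DERIV_divide[OF d1 d2] y1 by simp
    have d4: "DERIV (\<lambda>x. exp x * (x-1) + 1) y :> exp y * y" by (auto intro!: derivative_eq_intros simp: algebra_simps)
    have D: "DERIV ?f y :> (2*y * (2*(1-y)) - y^2 * (-2)) / ((2*(1-y)) * (2*(1-y))) - exp y * y"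
      by (rule DERIV_diff[OF d3 d4])
    have e: "exp y \<le> 1/(1-y)" using exp_le_inv y1 .
    have "y * exp y \<le> y * (1/(1-y))" using mult_left_mono[OF e y(1)] .
    also have "\<dots> = (2*y*(1-y)) / (2*(1-y)*(1-y))"
    proof -
      have nz: "1 - y \<noteq> 0" using y1 by simp
      have "(2*y*(1-y)) / (2*(1-y)*(1-y)) = ((1-y) * (2*y)) / ((1-y) * (2*(1-y)))" by (simp add: ac_simps)
      also have "\<dots> = (2*y) / (2*(1-y))" using nz by (rule mult_divide_mult_cancel_left)
      also have "\<dots> = y / (1-y)" by (rule mult_divide_mult_cancel_left) simp
      also have "\<dots> = y * (1/(1-y))" by simp
      finally show ?thesis by simp
    qed
    also have "\<dots> \<le> (y*(2-y)) / (2*(1-y)*(1-y))"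
    proof (rule divide_right_mono)
      show "2*y*(1-y) \<le> y*(2-y)" using y by (simp add: algebra_simps)
      show "0 \<le> 2*(1-y)*(1-y)" using y1 by simp
    qed
    also have "\<dots> = (2*y * (2*(1-y)) - y^2 * (-2)) / ((2*(1-y)) * (2*(1-y)))"
    proof -
      have e1: "(2*y) * (2*(1-y)) - y^2 * (-2) = 2 * (y*(2-y))" by (simp add: algebra_simps power2_eq_square)
      have e2: "(2*(1-y)) * (2*(1-y)) = 2 * (2*(1-y)*(1-y))" by (simp add: algebra_simps)
      show ?thesis unfolding e1 e2 by (rule mult_divide_mult_cancel_left[symmetric]) simp
    qed
    finally have "0 \<le> (2*y * (2*(1-y)) - y^2 * (-2)) / ((2*(1-y)) * (2*(1-y))) - exp y * y"
      by (simp add: mult.commute)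
    with D show "\<exists>d. DERIV ?f y :> d \<and> 0 \<le> d" by blast
  qed
  thus ?thesis by simp
qed

lemma L2aux: assumes "0 \<le> (x::real)" "x < 2" shows "exp x \<le> (5/3) * (4 - x) / (2 - x)^2"
proof (cases "x \<le> 8/5")
  case True
  have "exp (x/2) \<le> 1/(1 - x/2)" using exp_le_inv assms by simp
  hence "exp (x/2) ^ 2 \<le> (1/(1-x/2))^2" by (rule power_mono) simp
  moreover have "exp (x/2) ^ 2 = exp x" by (simp add: power2_eq_square exp_add[symmetric])
  moreover have "(1/(1-x/2))^2 = 4 / (2-x)^2"
  proof -
    have nz: "1 - x/2 \<noteq> 0" "2 - x \<noteq> 0" using assms by auto
    have "1/(1-x/2) = 2/(2-x)" using nz by (simp add: field_simps)
    thus ?thesis by (simp add: power_divide)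
  qed
  ultimately have "exp x \<le> 4 / (2-x)^2" by simp
  also have "\<dots> \<le> (5/3) * (4 - x) / (2 - x)^2" using True assms
    by (intro divide_right_mono) auto
  finally show ?thesis .
next
  case False
  have "exp x \<le> exp 2" using assms by simp
  also have "exp (2::real) = exp 1 ^ 2" using exp_of_nat_mult[of 2 "1::real"] by simp
  also have "\<dots> \<le> 3^2" using exp_le by (intro power_mono) auto
  also have "(3::real)^2 \<le> (5/3) * (4 - x) / (2 - x)^2"
  proof -
    have "(2-x)^2 \<le> (2/5)^2" using False assms by (intro power_mono) auto
    hence "9 * (2-x)^2 \<le> (5/3) * (4 - x)" using assms by (simp add: power2_eq_square)
    moreover have "(2-x)^2 > 0" using assms by simp
    ultimately show ?thesis by (simp add: pos_le_divide_eq)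
  qed
  finally show ?thesis .
qed

lemma L2: assumes "0 \<le> (x::real)" "x < 2" shows "exp x * (x - 1) + 1 \<le> (5/3) * x^2 / (2 - x)"
proof -
  let ?f = "\<lambda>x::real. (5/3) * (x^2 / (2 - x)) - (exp x * (x - 1) + 1)"
  have "?f 0 \<le> ?f x"
  proof (rule DERIV_nonneg_imp_nondecreasing[OF assms(1)])
    fix y assume y: "0 \<le> y" "y \<le> x"
    hence y1: "y < 2" using assms by simp
    have d1: "DERIV (\<lambda>x. x^2) y :> 2*y" by (auto intro!: derivative_eq_intros)
    have d2: "DERIV (\<lambda>x::real. 2 - x) y :> -1" by (auto intro!: derivative_eq_intros)
    have d3: "DERIV (\<lambda>x::real. x^2 / (2 - x)) y :> (2*y * (2-y) - y^2 * (-1)) / ((2-y) * (2-y))"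
      using DERIV_divide[OF d1 d2] y1 by simp
    have d4: "DERIV (\<lambda>x. exp x * (x-1) + 1) y :> exp y * y" by (auto intro!: derivative_eq_intros simp: algebra_simps)
    have D: "DERIV ?f y :> (5/3) * ((2*y * (2-y) - y^2 * (-1)) / ((2-y) * (2-y))) - exp y * y"
      by (rule DERIV_diff[OF DERIV_cmult[OF d3] d4])
    have e: "exp y \<le> (5/3) * (4 - y) / (2 - y)^2" using L2aux y y1 by simp
    have "y * exp y \<le> y * ((5/3) * (4 - y) / (2 - y)^2)" using mult_left_mono[OF e y(1)] .
    also have "\<dots> = (5/3) * ((2*y * (2-y) - y^2 * (-1)) / ((2-y) * (2-y)))"
    proof -
      have "2*y * (2-y) - y^2 * (-1) = y * (4-y)" by (simp add: algebra_simps power2_eq_square)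
      thus ?thesis by (simp add: power2_eq_square)
    qed
    finally have "0 \<le> (5/3) * ((2*y * (2-y) - y^2 * (-1)) / ((2-y) * (2-y))) - exp y * y"
      by (simp add: mult.commute)
    with D show "\<exists>d. DERIV ?f y :> d \<and> 0 \<le> d" by blast
  qed
  thus ?thesis by simp
qed

lemma tanh_ineq: "(u::real) * (exp u - 1) \<le> u^2 * (exp u + 1) / 2"
proof -
  let ?f = "\<lambda>u::real. u * (exp u + 1) / 2 - exp u + 1"
  have d: "DERIV ?f y :> ((exp y + 1) + y * exp y) / 2 - exp y" for y
    by (auto intro!: derivative_eq_intros)
  have nn: "((exp y + 1) + y * exp y) / 2 - exp y \<ge> 0" for y::real
  proof -
    have "1 - y \<le> exp (-y)" using exp_ge_add_one_self[of "-y"] by simp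
    hence "(1 - y) * exp y \<le> exp (-y) * exp y" by (simp add: mult_right_mono)
    hence "(1 - y) * exp y \<le> 1" by (simp add: exp_minus)
    thus ?thesis by (simp add: algebra_simps)
  qed
  show ?thesis
  proof (cases "u \<ge> 0")
    case True
    have "?f 0 \<le> ?f u"
    proof (rule DERIV_nonneg_imp_nondecreasing[OF True])
      show "\<And>x. 0 \<le> x \<Longrightarrow> x \<le> u \<Longrightarrow> \<exists>y. DERIV ?f x :> y \<and> 0 \<le> y" using d nn by blast
    qed
    hence "0 \<le> u * ?f u" using True by simp
    moreover have "u * ?f u = u^2*(exp u+1)/2 - u*(exp u - 1)" by (simp add: algebra_simps power2_eq_square)
    ultimately show ?thesis by linarith
  next
    case False
    have "?f u \<le> ?f 0"
    proof (rule DERIV_nonneg_imp_nondecreasing[of u 0 ?f])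
      show "u \<le> 0" using False by simp
      show "\<And>x. u \<le> x \<Longrightarrow> x \<le> 0 \<Longrightarrow> \<exists>y. DERIV ?f x :> y \<and> 0 \<le> y" using d nn by blast
    qed
    hence "0 \<le> u * ?f u" using False by (simp add: mult_nonpos_nonpos)
    moreover have "u * ?f u = u^2*(exp u+1)/2 - u*(exp u - 1)" by (simp add: algebra_simps power2_eq_square)
    ultimately show ?thesis by linarith
  qed
qed

definition Gf :: "(nat \<Rightarrow> nat \<Rightarrow> real) \<Rightarrow> nat \<Rightarrow> nat \<Rightarrow> nat \<Rightarrow> nat \<Rightarrow> real" where
  "Gf a i j k l = a i k + a j l - a i l - a j k"

lemma sum_diff2:
  fixes f g :: "nat \<Rightarrow> real"
  assumes "finite A" "i \<in> A" "j \<in> A" "i \<noteq> j" "\<And>x. x \<in> A \<Longrightarrow> x \<noteq> i \<Longrightarrow> x \<noteq> j \<Longrightarrow> f x = g x"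
  shows "sum f A = sum g A + f i + f j - g i - g j"
proof -
  have A: "A = insert i (insert j (A - {i, j}))" using assms by auto
  have "sum f A = f i + f j + sum f (A - {i,j})"
    by (subst A, simp add: assms)
  moreover have "sum g A = g i + g j + sum g (A - {i,j})"
    by (subst A, simp add: assms)
  moreover have "sum f (A - {i,j}) = sum g (A - {i,j})" using assms by (intro sum.cong) auto
  ultimately show ?thesis by simp
qed

lemma perm_stat_swap:
  assumes "i \<in> {1..n}" "j \<in> {1..n}"
  shows "perm_stat n a (\<pi> \<circ> Transposition.transpose i j) = perm_stat n a \<pi> - Gf a i j (\<pi> i) (\<pi> j)"
proof (cases "i = j")
  case True thus ?thesis by (simp add: Gf_def)
next
  case False
  have "perm_stat n a \<pi> = perm_stat n a (\<pi> \<circ> Transposition.transpose i j) + a i (\<pi> i) + a j (\<pi> j) - a i (\<pi> j) - a j (\<pi> i)"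
    unfolding perm_stat_def using assms False
    by (subst sum_diff2[where i=i and j=j]) auto
  thus ?thesis by (simp add: Gf_def)
qed

lemma sum_perm_row:
  assumes "\<pi> permutes {1..n}"
  shows "(\<Sum>j=1..n. f (\<pi> j)) = (\<Sum>k=1..n. (f k :: real))"
proof -
  have "sum f (\<pi> ` {1..n}) = (\<Sum>j=1..n. f (\<pi> j))"
    using sum.reindex[OF permutes_inj_on[OF assms, of "{1..n}"], of f] by (simp add: o_def)
  thus ?thesis using permutes_image[OF assms] by simp
qed

lemma mu_A_eq: "n > 0 \<Longrightarrow> mu_A n a = (\<Sum>i=1..n. \<Sum>j=1..n. a i j) / real n"
  by (simp add: mu_A_def tot_mean_def power2_eq_square)

lemma sum_G_swap:
  assumes "\<pi> permutes {1..n}" "n > 0"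
  shows "(\<Sum>i=1..n. \<Sum>j=1..n. Gf a i j (\<pi> i) (\<pi> j)) = 2 * real n * (perm_stat n a \<pi> - mu_A n a)"
proof -
  have r: "(\<Sum>j=1..n. a i (\<pi> j)) = (\<Sum>k=1..n. a i k)" for i using sum_perm_row[OF assms(1)] .
  have s0: "(\<Sum>i=1..n. \<Sum>j=1..n. Gf a i j (\<pi> i) (\<pi> j))
     = (\<Sum>i=1..n. \<Sum>j=1..n. a i (\<pi> i)) + (\<Sum>i=1..n. \<Sum>j=1..n. a j (\<pi> j))
       - (\<Sum>i=1..n. \<Sum>j=1..n. a i (\<pi> j)) - (\<Sum>i=1..n. \<Sum>j=1..n. a j (\<pi> i))"
    by (simp add: Gf_def sum.distrib sum_subtractf)
  have s1: "(\<Sum>i=1..n. \<Sum>j=1..n. a i (\<pi> i)) = real n * perm_stat n a \<pi>"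
    by (simp add: perm_stat_def sum_distrib_left)
  have s1': "(\<Sum>i=1..n. \<Sum>j=1..n. a j (\<pi> j)) = real n * perm_stat n a \<pi>"
    by (simp add: perm_stat_def)
  have s2: "(\<Sum>i=1..n. \<Sum>j=1..n. a i (\<pi> j)) = (\<Sum>i=1..n. \<Sum>k=1..n. a i k)"
    by (simp only: r)
  have s3: "(\<Sum>i=1..n. \<Sum>j=1..n. a j (\<pi> i)) = (\<Sum>i=1..n. \<Sum>k=1..n. a i k)"
    by (subst sum.swap) (simp only: r)
  have mu: "real n * mu_A n a = (\<Sum>i=1..n. \<Sum>k=1..n. a i k)" using assms(2) by (simp add: mu_A_eq)
  show ?thesis unfolding s0 s1 s1' s2 s3 mu[symmetric] by (simp add: algebra_simps)
qed

lemma two_var: assumes "(\<theta>::real) \<ge> 0"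
  shows "(x - y) * (exp (\<theta>*x) - exp (\<theta>*y)) \<le> \<theta> * (x - y)^2 * (exp (\<theta>*x) + exp (\<theta>*y)) / 2"
proof (cases "\<theta> = 0")
  case True thus ?thesis by simp
next
  case False
  hence tp: "\<theta> > 0" using assms by simp
  let ?u = "\<theta> * (x - y)"
  have t: "?u * (exp ?u - 1) \<le> ?u^2 * (exp ?u + 1) / 2" by (rule tanh_ineq)
  have eu: "exp ?u * exp (\<theta>*y) = exp (\<theta>*x)" by (simp add: exp_add[symmetric] algebra_simps)
  have "?u * (exp ?u - 1) * exp (\<theta>*y) \<le> ?u^2 * (exp ?u + 1) / 2 * exp (\<theta>*y)"
    using t by (rule mult_right_mono) simp
  hence "\<theta> * ((x - y) * (exp (\<theta>*x) - exp (\<theta>*y))) \<le> \<theta> * (\<theta> * (x - y)^2 * (exp (\<theta>*x) + exp (\<theta>*y)) / 2)"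
    using eu by (simp add: algebra_simps power2_eq_square)
  thus ?thesis using tp by (rule mult_left_le_imp_le)
qed

lemma reindex_swap:
  assumes "i \<in> {1..n}" "j \<in> {1..n}"
  shows "(\<Sum>\<pi>\<in>{\<pi>. \<pi> permutes {1..n}}. f (\<pi> \<circ> Transposition.transpose i j)) = (\<Sum>\<pi>\<in>{\<pi>. \<pi> permutes {1..n}}. (f \<pi> :: real))"
proof -
  let ?t = "Transposition.transpose i j"
  have tp: "?t permutes {1..n}" using assms by (rule permutes_swap_id)
  have "bij_betw (\<lambda>\<pi>. \<pi> \<circ> ?t) {\<pi>. \<pi> permutes {1..n}} {\<pi>. \<pi> permutes {1..n}}"
    by (rule bij_betw_byWitness[where f'="\<lambda>\<pi>. \<pi> \<circ> ?t"])
       (auto simp: comp_assoc intro: permutes_compose[OF tp])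
  from sum.reindex_bij_betw[OF this, of f] show ?thesis .
qed

lemma step2:
  assumes "i \<in> {1..n}" "j \<in> {1..n}" "\<theta> \<ge> 0"
  shows "(\<Sum>\<pi>\<in>{\<pi>. \<pi> permutes {1..n}}. Gf a i j (\<pi> i) (\<pi> j) * exp (\<theta> * (perm_stat n a \<pi> - m)))
    \<le> \<theta> / 2 * (\<Sum>\<pi>\<in>{\<pi>. \<pi> permutes {1..n}}. (Gf a i j (\<pi> i) (\<pi> j))^2 * exp (\<theta> * (perm_stat n a \<pi> - m)))"
proof -
  let ?S = "{\<pi>. \<pi> permutes {1..n}}"
  let ?t = "Transposition.transpose i j"
  define W where "W \<pi> = perm_stat n a \<pi> - m" for \<pi>
  define D where "D \<pi> = Gf a i j (\<pi> i) (\<pi> j)" for \<pi>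
  have WD: "W (\<pi> \<circ> ?t) = W \<pi> - D \<pi>" for \<pi> unfolding W_def D_def using perm_stat_swap[OF assms(1,2)] by simp
  have DD: "D (\<pi> \<circ> ?t) = - D \<pi>" for \<pi> unfolding D_def Gf_def by simp
  let ?T = "\<Sum>\<pi>\<in>?S. D \<pi> * exp (\<theta> * W \<pi>)"
  have "?T = (\<Sum>\<pi>\<in>?S. D (\<pi> \<circ> ?t) * exp (\<theta> * W (\<pi> \<circ> ?t)))"
    using reindex_swap[OF assms(1,2), of "\<lambda>\<pi>. D \<pi> * exp (\<theta> * W \<pi>)"] by simp
  also have "\<dots> = (\<Sum>\<pi>\<in>?S. - D \<pi> * exp (\<theta> * (W \<pi> - D \<pi>)))" by (simp add: WD DD)
  finally have T1: "?T = - (\<Sum>\<pi>\<in>?S. D \<pi> * exp (\<theta> * (W \<pi> - D \<pi>)))" by (simp add: sum_negf)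
  have T2: "(\<Sum>\<pi>\<in>?S. (W \<pi> - (W \<pi> - D \<pi>)) * (exp (\<theta> * W \<pi>) - exp (\<theta> * (W \<pi> - D \<pi>))))
     = ?T - (\<Sum>\<pi>\<in>?S. D \<pi> * exp (\<theta> * (W \<pi> - D \<pi>)))"
  proof -
    have "(\<Sum>\<pi>\<in>?S. (W \<pi> - (W \<pi> - D \<pi>)) * (exp (\<theta> * W \<pi>) - exp (\<theta> * (W \<pi> - D \<pi>))))
       = (\<Sum>\<pi>\<in>?S. D \<pi> * exp (\<theta> * W \<pi>) - D \<pi> * exp (\<theta> * (W \<pi> - D \<pi>)))"
      by (rule sum.cong) (simp_all add: right_diff_distrib)
    thus ?thesis by (simp only: sum_subtractf)
  qed
  have "2 * ?T = (\<Sum>\<pi>\<in>?S. (W \<pi> - (W \<pi> - D \<pi>)) * (exp (\<theta> * W \<pi>) - exp (\<theta> * (W \<pi> - D \<pi>))))"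
    unfolding T2 using T1 by simp
  also have "\<dots> \<le> (\<Sum>\<pi>\<in>?S. \<theta> * (W \<pi> - (W \<pi> - D \<pi>))^2 * (exp (\<theta> * W \<pi>) + exp (\<theta> * (W \<pi> - D \<pi>))) / 2)"
    by (intro sum_mono two_var assms(3))
  also have "\<dots> = \<theta> / 2 * ((\<Sum>\<pi>\<in>?S. (D \<pi>)^2 * exp (\<theta> * W \<pi>)) + (\<Sum>\<pi>\<in>?S. (D \<pi>)^2 * exp (\<theta> * (W \<pi> - D \<pi>))))"
  proof -
    have "(\<Sum>\<pi>\<in>?S. \<theta> * (W \<pi> - (W \<pi> - D \<pi>))^2 * (exp (\<theta> * W \<pi>) + exp (\<theta> * (W \<pi> - D \<pi>))) / 2)
      = (\<Sum>\<pi>\<in>?S. \<theta> / 2 * ((D \<pi>)^2 * exp (\<theta> * W \<pi>)) + \<theta> / 2 * ((D \<pi>)^2 * exp (\<theta> * (W \<pi> - D \<pi>))))"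
      by (rule sum.cong) (simp_all add: algebra_simps)
    thus ?thesis by (simp only: sum.distrib distrib_left sum_distrib_left)
  qed
  also have "(\<Sum>\<pi>\<in>?S. (D \<pi>)^2 * exp (\<theta> * (W \<pi> - D \<pi>))) = (\<Sum>\<pi>\<in>?S. (D (\<pi> \<circ> ?t))^2 * exp (\<theta> * W (\<pi> \<circ> ?t)))"
    by (simp add: WD DD)
  also have "\<dots> = (\<Sum>\<pi>\<in>?S. (D \<pi>)^2 * exp (\<theta> * W \<pi>))"
    using reindex_swap[OF assms(1,2), of "\<lambda>\<pi>. (D \<pi>)^2 * exp (\<theta> * W \<pi>)"] by simp
  finally show ?thesis unfolding W_def D_def by simp
qed

lemma norm_bound:
  assumes "x \<in> {1..n}" "y \<in> {1..n}"
  shows "\<bar>a x y - row_mean n a x\<bar> \<le> norm_A n a"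
proof -
  have fin: "finite {\<bar>a i j - row_mean n a i\<bar> | i j. i \<in> {1..n} \<and> j \<in> {1..n}}"
  proof -
    have "{\<bar>a i j - row_mean n a i\<bar> | i j. i \<in> {1..n} \<and> j \<in> {1..n}}
          \<subseteq> (\<lambda>(i,j). \<bar>a i j - row_mean n a i\<bar>) ` ({1..n} \<times> {1..n})" by auto
    thus ?thesis by (rule finite_subset) auto
  qed
  show ?thesis unfolding norm_A_def using assms by (intro Max_ge[OF fin]) auto
qed

lemma stat_shift:
  assumes "\<pi> permutes {1..n}" "\<sigma> permutes {1..n}" "\<And>y. y \<notin> F \<Longrightarrow> \<sigma> y = y" "finite F" "card F \<le> 4" "n \<ge> 1"
  shows "\<bar>perm_stat n a (\<sigma> \<circ> \<pi>) - perm_stat n a \<pi>\<bar> \<le> 8 * norm_A n a"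
proof -
  let ?X = "{x \<in> {1..n}. \<pi> x \<in> F}"
  have pin: "x \<in> {1..n} \<Longrightarrow> \<pi> x \<in> {1..n}" for x using permutes_in_image[OF assms(1)] by simp
  have sin: "y \<in> {1..n} \<Longrightarrow> \<sigma> y \<in> {1..n}" for y using permutes_in_image[OF assms(2)] by simp
  have cX: "card ?X \<le> 4"
  proof -
    have "card ?X \<le> card F"
      by (rule card_inj_on_le[of \<pi>]) (auto intro: inj_on_subset[OF permutes_inj_on[OF assms(1)]] simp: assms(4))
    thus ?thesis using assms(5) by simp
  qed
  have "perm_stat n a (\<sigma> \<circ> \<pi>) - perm_stat n a \<pi> = (\<Sum>x=1..n. a x (\<sigma> (\<pi> x)) - a x (\<pi> x))"
    by (simp add: perm_stat_def sum_subtractf)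
  also have "\<dots> = (\<Sum>x\<in>?X. a x (\<sigma> (\<pi> x)) - a x (\<pi> x))"
    by (rule sum.mono_neutral_right) (auto simp: assms(3))
  finally have "\<bar>perm_stat n a (\<sigma> \<circ> \<pi>) - perm_stat n a \<pi>\<bar> \<le> (\<Sum>x\<in>?X. \<bar>a x (\<sigma> (\<pi> x)) - a x (\<pi> x)\<bar>)"
    by (simp add: sum_abs)
  also have "\<dots> \<le> (\<Sum>x\<in>?X. 2 * norm_A n a)"
  proof (rule sum_mono)
    fix x assume x: "x \<in> ?X"
    have "\<bar>a x (\<sigma> (\<pi> x)) - row_mean n a x\<bar> \<le> norm_A n a" using x pin sin by (intro norm_bound) auto
    moreover have "\<bar>a x (\<pi> x) - row_mean n a x\<bar> \<le> norm_A n a" using x pin by (intro norm_bound) auto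
    ultimately show "\<bar>a x (\<sigma> (\<pi> x)) - a x (\<pi> x)\<bar> \<le> 2 * norm_A n a" by linarith
  qed
  also have "\<dots> = card ?X * (2 * norm_A n a)" by simp
  also have "\<dots> \<le> 4 * (2 * norm_A n a)"
  proof (rule mult_right_mono)
    show "real (card ?X) \<le> 4" using cX by simp
    show "0 \<le> 2 * norm_A n a" using norm_bound[of 1 n 1 a] assms(6) by auto
  qed
  finally show ?thesis by simp
qed

definition Mf where
  "Mf n a m \<theta> i j kl = (\<Sum>\<pi>\<in>{\<pi>\<in>{\<pi>. \<pi> permutes {1..n}}. (\<pi> i, \<pi> j) = kl}. exp (\<theta> * (perm_stat n a \<pi> - m)))"

lemma card4: "card {a,b,c,d} \<le> 4"
  using card_length[of "[a,b,c,d]"] by simp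

lemma fiber_cmp:
  assumes n: "n \<ge> 1" and th: "\<theta> \<ge> 0"
    and kl: "k \<in> {1..n}" "l \<in> {1..n}" "k' \<in> {1..n}" "l' \<in> {1..n}" "k \<noteq> l" "k' \<noteq> l'"
  shows "Mf n a m \<theta> i j (k,l) \<le> exp (8 * norm_A n a * \<theta>) * Mf n a m \<theta> i j (k',l')"
proof -
  define t1 where "t1 = Transposition.transpose k k'"
  define t2 where "t2 = Transposition.transpose (t1 l) l'"
  define \<sigma> where "\<sigma> = t2 \<circ> t1"
  have t1p: "t1 permutes {1..n}" unfolding t1_def using kl by (intro permutes_swap_id) auto
  have t1l: "t1 l \<in> {1..n}" using permutes_in_image[OF t1p] kl by simp
  have t2p: "t2 permutes {1..n}" unfolding t2_def using kl t1l by (intro permutes_swap_id) auto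
  have sp: "\<sigma> permutes {1..n}" unfolding \<sigma>_def using t1p t2p by (rule permutes_compose)
  have sk: "\<sigma> k = k'" unfolding \<sigma>_def t2_def t1_def using kl by (auto simp: Transposition.transpose_def)
  have sl: "\<sigma> l = l'" unfolding \<sigma>_def t2_def t1_def using kl by (auto simp: Transposition.transpose_def)
  have supp: "y \<notin> {k,k',l,l'} \<Longrightarrow> \<sigma> y = y" for y unfolding \<sigma>_def t2_def t1_def by (auto simp: Transposition.transpose_def)
  let ?S = "{\<pi>. \<pi> permutes {1..n}}"
  let ?A = "{\<pi>\<in>?S. (\<pi> i, \<pi> j) = (k,l)}"
  let ?B = "{\<pi>\<in>?S. (\<pi> i, \<pi> j) = (k',l')}"
  let ?e = "\<lambda>\<pi>. exp (\<theta> * (perm_stat n a \<pi> - m))"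
  let ?c = "8 * norm_A n a"
  have fin: "finite ?S" using finite_permutations[of "{1..n}"] by simp
  have "Mf n a m \<theta> i j (k,l) = (\<Sum>\<pi>\<in>?A. ?e \<pi>)" by (simp add: Mf_def)
  also have "\<dots> \<le> (\<Sum>\<pi>\<in>?A. exp (?c * \<theta>) * ?e (\<sigma> \<circ> \<pi>))"
  proof (rule sum_mono)
    fix \<pi> assume p: "\<pi> \<in> ?A"
    have "\<bar>perm_stat n a (\<sigma> \<circ> \<pi>) - perm_stat n a \<pi>\<bar> \<le> ?c"
      using p sp supp n by (intro stat_shift[where F="{k,k',l,l'}"]) (auto intro: card4)
    hence "perm_stat n a \<pi> - m \<le> ?c + (perm_stat n a (\<sigma> \<circ> \<pi>) - m)" by linarith
    from mult_left_mono[OF this th]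
    have "\<theta> * (perm_stat n a \<pi> - m) \<le> ?c * \<theta> + \<theta> * (perm_stat n a (\<sigma> \<circ> \<pi>) - m)"
      by (simp add: algebra_simps)
    thus "?e \<pi> \<le> exp (?c * \<theta>) * ?e (\<sigma> \<circ> \<pi>)" by (simp add: exp_add[symmetric])
  qed
  also have "\<dots> = exp (?c * \<theta>) * (\<Sum>\<pi>\<in>?A. ?e (\<sigma> \<circ> \<pi>))" by (simp add: sum_distrib_left)
  also have "(\<Sum>\<pi>\<in>?A. ?e (\<sigma> \<circ> \<pi>)) = (\<Sum>\<pi>\<in>(\<lambda>\<pi>. \<sigma> \<circ> \<pi>) ` ?A. ?e \<pi>)"
  proof -
    have "inj_on (\<lambda>\<pi>. \<sigma> \<circ> \<pi>) ?A"
      using permutes_inj[OF sp] by (auto simp: inj_on_def fun_eq_iff inj_def)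
    from sum.reindex[OF this, of ?e] show ?thesis by (simp add: o_def)
  qed
  also have "\<dots> \<le> (\<Sum>\<pi>\<in>?B. ?e \<pi>)"
    by (rule sum_mono2) (use fin sp sk sl in \<open>auto intro: permutes_compose\<close>)
  also have "\<dots> = Mf n a m \<theta> i j (k',l')" by (simp add: Mf_def)
  finally show ?thesis by (simp add: mult_left_mono)
qed

lemma card_T: "card {(k,l). k \<in> {1..n} \<and> l \<in> {1..(n::nat)} \<and> k \<noteq> l} = n * (n - 1)"
proof -
  have "{(k,l). k \<in> {1..n} \<and> l \<in> {1..(n::nat)} \<and> k \<noteq> l} = Sigma {1..n} (\<lambda>k. {1..n} - {k})" by auto
  moreover have "card (Sigma {1..n} (\<lambda>k. {1..n} - {k})) = n * (n - 1)"
    by (subst card_SigmaI) auto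
  ultimately show ?thesis by simp
qed

lemma fiber_group:
  fixes n :: nat
  assumes "i \<in> {1..n}" "j \<in> {1..n}" "i \<noteq> j"
  shows "(\<Sum>kl\<in>{(k,l). k \<in> {1..n} \<and> l \<in> {1..n} \<and> k \<noteq> l}.
            (\<Sum>\<pi>\<in>{\<pi>\<in>{\<pi>. \<pi> permutes {1..n}}. (\<pi> i, \<pi> j) = kl}. h \<pi>))
         = (\<Sum>\<pi>\<in>{\<pi>. \<pi> permutes {1..n}}. (h \<pi> :: real))"
proof (rule sum.group)
  show "finite {\<pi>. \<pi> permutes {1..n}}" using finite_permutations[of "{1..n}"] by simp
  show "finite {(k,l). k \<in> {1..n} \<and> l \<in> {1..(n::nat)} \<and> k \<noteq> l}"
    by (rule finite_subset[of _ "{1..n} \<times> {1..n}"]) auto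
  show "(\<lambda>\<pi>. (\<pi> i, \<pi> j)) ` {\<pi>. \<pi> permutes {1..n}} \<subseteq> {(k,l). k \<in> {1..n} \<and> l \<in> {1..n} \<and> k \<noteq> l}"
  proof
    fix x assume "x \<in> (\<lambda>\<pi>. (\<pi> i, \<pi> j)) ` {\<pi>. \<pi> permutes {1..n}}"
    then obtain \<pi> where p: "\<pi> permutes {1..n}" and x: "x = (\<pi> i, \<pi> j)" by auto
    have "\<pi> i \<noteq> \<pi> j" using permutes_inj[OF p] assms(3) by (auto dest: injD)
    thus "x \<in> {(k,l). k \<in> {1..n} \<and> l \<in> {1..n} \<and> k \<noteq> l}"
      using x assms permutes_in_image[OF p] by auto
  qed
qed

lemma fiber_bound:
  assumes n: "n \<ge> 2" and th: "\<theta> \<ge> 0" and ij: "i \<in> {1..n}" "j \<in> {1..n}" "i \<noteq> j"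
    and kl: "k \<in> {1..n}" "l \<in> {1..n}" "k \<noteq> l"
  shows "real (n * (n - 1)) * Mf n a m \<theta> i j (k,l)
     \<le> exp (8 * norm_A n a * \<theta>) * (\<Sum>\<pi>\<in>{\<pi>. \<pi> permutes {1..n}}. exp (\<theta> * (perm_stat n a \<pi> - m)))"
proof -
  let ?T = "{(k,l). k \<in> {1..n} \<and> l \<in> {1..(n::nat)} \<and> k \<noteq> l}"
  have "(\<Sum>kl'\<in>?T. Mf n a m \<theta> i j (k,l)) = real (card ?T) * Mf n a m \<theta> i j (k,l)"
    by (rule sum_constant)
  hence "real (n * (n - 1)) * Mf n a m \<theta> i j (k,l) = (\<Sum>kl'\<in>?T. Mf n a m \<theta> i j (k,l))"
    by (simp only: card_T)
  also have "\<dots> \<le> (\<Sum>kl'\<in>?T. exp (8 * norm_A n a * \<theta>) * Mf n a m \<theta> i j kl')"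
    by (rule sum_mono) (use n th kl in \<open>auto intro!: fiber_cmp\<close>)
  also have "\<dots> = exp (8 * norm_A n a * \<theta>) * (\<Sum>kl'\<in>?T. Mf n a m \<theta> i j kl')"
    by (simp add: sum_distrib_left)
  also have "(\<Sum>kl'\<in>?T. Mf n a m \<theta> i j kl') = (\<Sum>\<pi>\<in>{\<pi>. \<pi> permutes {1..n}}. exp (\<theta> * (perm_stat n a \<pi> - m)))"
    unfolding Mf_def by (rule fiber_group[OF ij])
  finally show ?thesis .
qed

lemma cancelN: "(N::real) \<noteq> 0 \<Longrightarrow> N * (X * (Y / N)) = Y * X"
  by (simp add: field_simps)

lemma step4:
  assumes n: "n \<ge> 2" and th: "\<theta> \<ge> 0" and ij: "i \<in> {1..n}" "j \<in> {1..n}"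
  shows "real (n * (n - 1)) * (\<Sum>\<pi>\<in>{\<pi>. \<pi> permutes {1..n}}. (Gf a i j (\<pi> i) (\<pi> j))^2 * exp (\<theta> * (perm_stat n a \<pi> - m)))
     \<le> exp (8 * norm_A n a * \<theta>) * (\<Sum>\<pi>\<in>{\<pi>. \<pi> permutes {1..n}}. exp (\<theta> * (perm_stat n a \<pi> - m)))
        * (\<Sum>k=1..n. \<Sum>l=1..n. (Gf a i j k l)^2)"
proof (cases "i = j")
  case True
  have "Gf a i j k l = 0" if "k = l" for k l using True that by (simp add: Gf_def)
  hence "(\<Sum>\<pi>\<in>{\<pi>. \<pi> permutes {1..n}}. (Gf a i j (\<pi> i) (\<pi> j))^2 * exp (\<theta> * (perm_stat n a \<pi> - m))) = 0"
    using True by simp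
  thus ?thesis by (simp add: sum_nonneg)
next
  case False
  let ?T = "{(k,l). k \<in> {1..n} \<and> l \<in> {1..(n::nat)} \<and> k \<noteq> l}"
  let ?S = "{\<pi>. \<pi> permutes {1..n}}"
  let ?Z = "\<Sum>\<pi>\<in>?S. exp (\<theta> * (perm_stat n a \<pi> - m))"
  let ?E = "exp (8 * norm_A n a * \<theta>)"
  let ?N = "real (n * (n - 1))"
  have Np: "?N > 0" using n by simp
  have "(\<Sum>\<pi>\<in>?S. (Gf a i j (\<pi> i) (\<pi> j))^2 * exp (\<theta> * (perm_stat n a \<pi> - m)))
      = (\<Sum>kl\<in>?T. \<Sum>\<pi>\<in>{\<pi>\<in>?S. (\<pi> i, \<pi> j) = kl}. (Gf a i j (\<pi> i) (\<pi> j))^2 * exp (\<theta> * (perm_stat n a \<pi> - m)))"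
    by (rule fiber_group[OF ij False, symmetric])
  also have "\<dots> = (\<Sum>kl\<in>?T. (Gf a i j (fst kl) (snd kl))^2 * Mf n a m \<theta> i j kl)"
    unfolding Mf_def by (intro sum.cong refl) (auto simp: sum_distrib_left)
  also have "\<dots> \<le> (\<Sum>kl\<in>?T. (Gf a i j (fst kl) (snd kl))^2 * (?E * ?Z / ?N))"
  proof (rule sum_mono)
    fix kl assume "kl \<in> ?T"
    then obtain k l where kl: "kl = (k,l)" "k \<in> {1..n}" "l \<in> {1..n}" "k \<noteq> l" by auto
    have "?N * Mf n a m \<theta> i j (k,l) \<le> ?E * ?Z" using fiber_bound[OF n th ij False kl(2-4)] .
    hence "Mf n a m \<theta> i j (k,l) * ?N \<le> ?E * ?Z" by (simp only: mult.commute)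
    hence Mle: "Mf n a m \<theta> i j (k,l) \<le> ?E * ?Z / ?N" using pos_le_divide_eq[OF Np] by blast
    show "(Gf a i j (fst kl) (snd kl))^2 * Mf n a m \<theta> i j kl \<le> (Gf a i j (fst kl) (snd kl))^2 * (?E * ?Z / ?N)"
      using kl(1) mult_left_mono[OF Mle zero_le_power2[of "Gf a i j k l"]] by simp
  qed
  also have "\<dots> = (\<Sum>kl\<in>?T. (Gf a i j (fst kl) (snd kl))^2) * (?E * ?Z / ?N)"
    by (rule sum_distrib_right[symmetric])
  finally have L1: "(\<Sum>\<pi>\<in>?S. (Gf a i j (\<pi> i) (\<pi> j))^2 * exp (\<theta> * (perm_stat n a \<pi> - m)))
      \<le> (\<Sum>kl\<in>?T. (Gf a i j (fst kl) (snd kl))^2) * (?E * ?Z / ?N)" .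
  have "(\<Sum>kl\<in>?T. (Gf a i j (fst kl) (snd kl))^2) \<le> (\<Sum>kl\<in>{1..n}\<times>{1..n}. (Gf a i j (fst kl) (snd kl))^2)"
    by (rule sum_mono2) auto
  also have "\<dots> = (\<Sum>k=1..n. \<Sum>l=1..n. (Gf a i j k l)^2)"
    by (simp add: sum.cartesian_product case_prod_beta)
  finally have L2: "(\<Sum>kl\<in>?T. (Gf a i j (fst kl) (snd kl))^2) \<le> (\<Sum>k=1..n. \<Sum>l=1..n. (Gf a i j k l)^2)" .
  have "0 \<le> ?E * ?Z" by (intro mult_nonneg_nonneg sum_nonneg) auto
  hence EZ: "0 \<le> ?E * ?Z / ?N" using Np by (rule divide_nonneg_pos)
  have "(\<Sum>\<pi>\<in>?S. (Gf a i j (\<pi> i) (\<pi> j))^2 * exp (\<theta> * (perm_stat n a \<pi> - m)))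
      \<le> (\<Sum>k=1..n. \<Sum>l=1..n. (Gf a i j k l)^2) * (?E * ?Z / ?N)"
    by (rule order_trans[OF L1 mult_right_mono[OF L2 EZ]])
  hence "?N * (\<Sum>\<pi>\<in>?S. (Gf a i j (\<pi> i) (\<pi> j))^2 * exp (\<theta> * (perm_stat n a \<pi> - m)))
      \<le> ?N * ((\<Sum>k=1..n. \<Sum>l=1..n. (Gf a i j k l)^2) * (?E * ?Z / ?N))"
    using Np by (intro mult_left_mono) auto
  also have "?N * ((\<Sum>k=1..n. \<Sum>l=1..n. (Gf a i j k l)^2) * (?E * ?Z / ?N)) = ?E * ?Z * (\<Sum>k=1..n. \<Sum>l=1..n. (Gf a i j k l)^2)"
    by (rule cancelN) (use n in simp)
  finally show ?thesis .
qed

lemma sq_diff_sum: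
  fixes z :: "nat \<Rightarrow> real"
  assumes "finite K" "K \<noteq> {}"
  shows "(\<Sum>k\<in>K. \<Sum>l\<in>K. (z k - z l)^2) = 2 * card K * (\<Sum>k\<in>K. (z k - (\<Sum>x\<in>K. z x) / card K)^2)"
proof -
  let ?N = "real (card K)" and ?s = "\<Sum>x\<in>K. z x" and ?q = "\<Sum>x\<in>K. (z x)^2"
  have N: "?N > 0" using assms by (simp add: card_gt_0_iff)
  have "(\<Sum>k\<in>K. \<Sum>l\<in>K. (z k - z l)^2) = (\<Sum>k\<in>K. \<Sum>l\<in>K. (z k)^2 + (z l)^2 - (2 * z k) * z l)"
    by (intro sum.cong refl) (simp add: power2_eq_square algebra_simps)
  also have "\<dots> = (\<Sum>k\<in>K. ?N * (z k)^2 + ?q - (2 * z k) * ?s)"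
    by (intro sum.cong refl) (simp only: sum.distrib sum_subtractf sum_constant sum_distrib_left[symmetric])
  also have "\<dots> = ?N * ?q + ?N * ?q - 2 * ?s * ?s"
    by (simp only: sum.distrib sum_subtractf sum_constant sum_distrib_left[symmetric] sum_distrib_right[symmetric])
  finally have L: "(\<Sum>k\<in>K. \<Sum>l\<in>K. (z k - z l)^2) = ?N * ?q + ?N * ?q - 2 * ?s * ?s" .
  have "(\<Sum>k\<in>K. (z k - ?s / ?N)^2) = (\<Sum>k\<in>K. (z k)^2 - 2 * (?s / ?N) * z k + (?s / ?N)^2)"
    by (simp add: power2_eq_square algebra_simps)
  also have "\<dots> = ?q - 2 * (?s / ?N) * ?s + ?N * (?s / ?N)^2"
    by (simp only: sum.distrib sum_subtractf sum_constant sum_distrib_left[symmetric])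
  finally have R: "(\<Sum>k\<in>K. (z k - ?s / ?N)^2) = ?q - 2 * (?s / ?N) * ?s + ?N * (?s / ?N)^2" .
  have "2 * ?N * (?q - 2 * (?s / ?N) * ?s + ?N * (?s / ?N)^2) = ?N * ?q + ?N * ?q - 2 * ?s * ?s"
  proof -
    have e: "?N * (?s / ?N) = ?s" using N by (auto simp: field_simps)
    have "2 * ?N * (?q - 2 * (?s / ?N) * ?s + ?N * (?s / ?N)^2) = 2 * ?N * ?q - 4 * (?N * (?s / ?N)) * ?s + 2 * (?N * (?s / ?N)) * (?N * (?s / ?N))"
      by (simp add: algebra_simps power2_eq_square)
    also have "\<dots> = ?N * ?q + ?N * ?q - 2 * ?s * ?s" by (simp only: e)
    finally show ?thesis .
  qed
  thus ?thesis unfolding L R by simp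
qed

lemma sumG_identity:
  assumes n: "n \<ge> 2"
  shows "(\<Sum>i=1..n. \<Sum>j=1..n. \<Sum>k=1..n. \<Sum>l=1..n. (Gf a i j k l)^2)
       = 4 * (real n)^2 * (real n - 1) * sigma2_A n a"
proof -
  let ?r = "row_mean n a" and ?c = "col_mean n a" and ?t = "tot_mean n a"
  have nz: "real n \<noteq> 0" using n by simp
  have ne: "{1..n} \<noteq> {}" using n by simp
  define e where "e i k = a i k - ?r i" for i k
  have a1: "(\<Sum>k=1..n. \<Sum>l=1..n. (Gf a i j k l)^2) = 2 * real n * (\<Sum>k=1..n. (e i k - e j k)^2)" for i j
  proof -
    let ?z = "\<lambda>k. a i k - a j k"
    have "(\<Sum>k=1..n. \<Sum>l=1..n. (Gf a i j k l)^2) = (\<Sum>k=1..n. \<Sum>l=1..n. (?z k - ?z l)^2)"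
      by (intro sum.cong refl) (simp add: Gf_def algebra_simps)
    also have "\<dots> = 2 * real n * (\<Sum>k=1..n. (?z k - (\<Sum>x=1..n. ?z x) / real n)^2)"
      using sq_diff_sum[of "{1..n}" ?z] ne by simp
    also have "(\<Sum>x=1..n. ?z x) / real n = ?r i - ?r j"
      by (simp add: row_mean_def sum_subtractf diff_divide_distrib)
    finally show ?thesis by (simp add: e_def algebra_simps)
  qed
  have a2: "(\<Sum>i=1..n. \<Sum>j=1..n. (e i k - e j k)^2) = 2 * real n * (\<Sum>i=1..n. (a i k - ?r i - ?c k + ?t)^2)" for k
  proof -
    have "(\<Sum>i=1..n. \<Sum>j=1..n. (e i k - e j k)^2) = 2 * real n * (\<Sum>i=1..n. (e i k - (\<Sum>x=1..n. e x k) / real n)^2)"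
      using sq_diff_sum[of "{1..n}" "\<lambda>i. e i k"] ne by simp
    also have "(\<Sum>x=1..n. e x k) / real n = ?c k - ?t"
    proof -
      have "(\<Sum>x=1..n. e x k) = (\<Sum>x=1..n. a x k) - (\<Sum>x=1..n. ?r x)" by (simp add: e_def sum_subtractf)
      moreover have "(\<Sum>x=1..n. ?r x) = (\<Sum>x=1..n. \<Sum>y=1..n. a x y) / real n"
        by (simp add: row_mean_def sum_divide_distrib)
      ultimately show ?thesis using nz
        by (simp add: col_mean_def tot_mean_def diff_divide_distrib power2_eq_square)
    qed
    finally show ?thesis by (simp add: e_def algebra_simps)
  qed
  have sw: "(\<Sum>i=1..n. \<Sum>j=1..n. \<Sum>k=1..n. f i j k) = (\<Sum>k=1..n. \<Sum>i=1..n. \<Sum>j=1..n. (f i j k :: real))" for f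
  proof -
    have "(\<Sum>i=1..n. \<Sum>j=1..n. \<Sum>k=1..n. f i j k) = (\<Sum>i=1..n. \<Sum>k=1..n. \<Sum>j=1..n. f i j k)"
      by (rule sum.cong[OF refl], rule sum.swap)
    also have "\<dots> = (\<Sum>k=1..n. \<Sum>i=1..n. \<Sum>j=1..n. f i j k)" by (rule sum.swap)
    finally show ?thesis .
  qed
  have "(\<Sum>i=1..n. \<Sum>j=1..n. \<Sum>k=1..n. \<Sum>l=1..n. (Gf a i j k l)^2)
      = (\<Sum>i=1..n. \<Sum>j=1..n. 2 * real n * (\<Sum>k=1..n. (e i k - e j k)^2))" by (simp only: a1)
  also have "\<dots> = 2 * real n * (\<Sum>i=1..n. \<Sum>j=1..n. \<Sum>k=1..n. (e i k - e j k)^2)"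
    by (simp only: sum_distrib_left[symmetric])
  also have "\<dots> = 2 * real n * (\<Sum>k=1..n. \<Sum>i=1..n. \<Sum>j=1..n. (e i k - e j k)^2)"
    by (subst sw) (rule refl)
  also have "\<dots> = 2 * real n * (\<Sum>k=1..n. 2 * real n * (\<Sum>i=1..n. (a i k - ?r i - ?c k + ?t)^2))"
    by (simp only: a2)
  also have "\<dots> = 4 * (real n)^2 * (\<Sum>i=1..n. \<Sum>k=1..n. (a i k - ?r i - ?c k + ?t)^2)"
  proof -
    have "(\<Sum>k=1..n. 2 * real n * (\<Sum>i=1..n. (a i k - ?r i - ?c k + ?t)^2)) = 2 * real n * (\<Sum>k=1..n. \<Sum>i=1..n. (a i k - ?r i - ?c k + ?t)^2)"
      by (rule sum_distrib_left[symmetric])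
    also have "(\<Sum>k=1..n. \<Sum>i=1..n. (a i k - ?r i - ?c k + ?t)^2) = (\<Sum>i=1..n. \<Sum>k=1..n. (a i k - ?r i - ?c k + ?t)^2)"
      by (rule sum.swap)
    finally show ?thesis by (simp add: power2_eq_square)
  qed
  also have "(\<Sum>i=1..n. \<Sum>k=1..n. (a i k - ?r i - ?c k + ?t)^2) = (real n - 1) * sigma2_A n a"
    using n by (simp add: sigma2_A_def)
  finally show ?thesis by (simp add: algebra_simps)
qed

lemma key_deriv_bound:
  assumes n: "n \<ge> 2" and th: "\<theta> \<ge> 0"
  shows "(\<Sum>\<pi>\<in>{\<pi>. \<pi> permutes {1..n}}. (perm_stat n a \<pi> - mu_A n a) * exp (\<theta> * (perm_stat n a \<pi> - mu_A n a)))
     \<le> \<theta> * exp (8 * norm_A n a * \<theta>) * sigma2_A n a * (\<Sum>\<pi>\<in>{\<pi>. \<pi> permutes {1..n}}. exp (\<theta> * (perm_stat n a \<pi> - mu_A n a)))"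
proof -
  let ?S = "{\<pi>. \<pi> permutes {1..n}}"
  let ?m = "mu_A n a"
  let ?W = "\<lambda>\<pi>. perm_stat n a \<pi> - ?m"
  let ?Z = "\<Sum>\<pi>\<in>?S. exp (\<theta> * ?W \<pi>)"
  let ?E = "exp (8 * norm_A n a * \<theta>)"
  let ?N = "real (n * (n - 1))"
  let ?G = "\<lambda>i j \<pi>. Gf a i j (\<pi> i) (\<pi> j)"
  have Np: "?N > 0" using n by simp
  have n0: "n > 0" using n by simp
  have "2 * real n * (\<Sum>\<pi>\<in>?S. ?W \<pi> * exp (\<theta> * ?W \<pi>)) = (\<Sum>\<pi>\<in>?S. (2 * real n * ?W \<pi>) * exp (\<theta> * ?W \<pi>))"
    by (simp add: sum_distrib_left mult.assoc)
  also have "\<dots> = (\<Sum>\<pi>\<in>?S. (\<Sum>i=1..n. \<Sum>j=1..n. ?G i j \<pi>) * exp (\<theta> * ?W \<pi>))"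
  proof (intro sum.cong refl)
    fix \<pi> assume "\<pi> \<in> ?S"
    hence "(\<Sum>i=1..n. \<Sum>j=1..n. ?G i j \<pi>) = 2 * real n * ?W \<pi>" using sum_G_swap[OF _ n0] by simp
    thus "2 * real n * ?W \<pi> * exp (\<theta> * ?W \<pi>) = (\<Sum>i=1..n. \<Sum>j=1..n. ?G i j \<pi>) * exp (\<theta> * ?W \<pi>)"
      by (simp only:)
  qed
  also have "\<dots> = (\<Sum>\<pi>\<in>?S. \<Sum>i=1..n. \<Sum>j=1..n. ?G i j \<pi> * exp (\<theta> * ?W \<pi>))"
    by (simp only: sum_distrib_right)
  also have "\<dots> = (\<Sum>i=1..n. \<Sum>j=1..n. \<Sum>\<pi>\<in>?S. ?G i j \<pi> * exp (\<theta> * ?W \<pi>))"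
  proof -
    have "(\<Sum>\<pi>\<in>?S. \<Sum>i=1..n. \<Sum>j=1..n. ?G i j \<pi> * exp (\<theta> * ?W \<pi>)) = (\<Sum>i=1..n. \<Sum>\<pi>\<in>?S. \<Sum>j=1..n. ?G i j \<pi> * exp (\<theta> * ?W \<pi>))"
      by (rule sum.swap)
    also have "\<dots> = (\<Sum>i=1..n. \<Sum>j=1..n. \<Sum>\<pi>\<in>?S. ?G i j \<pi> * exp (\<theta> * ?W \<pi>))"
      by (intro sum.cong refl) (rule sum.swap)
    finally show ?thesis .
  qed
  also have "\<dots> \<le> (\<Sum>i=1..n. \<Sum>j=1..n. \<theta> / 2 * (\<Sum>\<pi>\<in>?S. (?G i j \<pi>)^2 * exp (\<theta> * ?W \<pi>)))"
    by (intro sum_mono step2 th) auto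
  also have "\<dots> \<le> (\<Sum>i=1..n. \<Sum>j=1..n. \<theta> / 2 * (?E * ?Z * (\<Sum>k=1..n. \<Sum>l=1..n. (Gf a i j k l)^2) / ?N))"
  proof (intro sum_mono mult_left_mono)
    fix i j assume ij: "i \<in> {1..n}" "j \<in> {1..n}"
    have "?N * (\<Sum>\<pi>\<in>?S. (?G i j \<pi>)^2 * exp (\<theta> * ?W \<pi>)) \<le> ?E * ?Z * (\<Sum>k=1..n. \<Sum>l=1..n. (Gf a i j k l)^2)"
      using step4[OF n th ij] .
    hence "(\<Sum>\<pi>\<in>?S. (?G i j \<pi>)^2 * exp (\<theta> * ?W \<pi>)) * ?N \<le> ?E * ?Z * (\<Sum>k=1..n. \<Sum>l=1..n. (Gf a i j k l)^2)"
      by (simp only: mult.commute)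
    thus "(\<Sum>\<pi>\<in>?S. (?G i j \<pi>)^2 * exp (\<theta> * ?W \<pi>)) \<le> ?E * ?Z * (\<Sum>k=1..n. \<Sum>l=1..n. (Gf a i j k l)^2) / ?N"
      using pos_le_divide_eq[OF Np] by blast
    show "0 \<le> \<theta> / 2" using th by simp
  qed
  also have "\<dots> = \<theta> / 2 * (?E * ?Z / ?N) * (\<Sum>i=1..n. \<Sum>j=1..n. \<Sum>k=1..n. \<Sum>l=1..n. (Gf a i j k l)^2)"
  proof -
    let ?C = "\<theta> / 2 * (?E * ?Z / ?N)"
    have "(\<Sum>i=1..n. \<Sum>j=1..n. \<theta> / 2 * (?E * ?Z * (\<Sum>k=1..n. \<Sum>l=1..n. (Gf a i j k l)^2) / ?N))
        = (\<Sum>i=1..n. \<Sum>j=1..n. ?C * (\<Sum>k=1..n. \<Sum>l=1..n. (Gf a i j k l)^2))"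
      by (intro sum.cong refl) (simp add: algebra_simps)
    also have "\<dots> = ?C * (\<Sum>i=1..n. \<Sum>j=1..n. \<Sum>k=1..n. \<Sum>l=1..n. (Gf a i j k l)^2)"
      by (simp only: sum_distrib_left[symmetric])
    finally show ?thesis .
  qed
  also have "\<dots> = \<theta> / 2 * (?E * ?Z / ?N) * (4 * (real n)^2 * (real n - 1) * sigma2_A n a)"
    by (simp only: sumG_identity[OF n])
  also have "\<dots> = 2 * real n * (\<theta> * ?E * sigma2_A n a * ?Z)"
  proof -
    have "?N = real n * (real n - 1)" using n by (simp add: of_nat_diff)
    moreover have "real n - 1 \<noteq> 0" "real n \<noteq> 0" using n by auto
    ultimately show ?thesis by (simp add: field_simps power2_eq_square)
  qed
  finally show ?thesis using n by simp
qed

definition phi :: "real \<Rightarrow> real \<Rightarrow> real" where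
  "phi c x = (exp (c * x) * (c * x - 1) + 1) / c^2"

lemma phi_deriv: assumes "c \<noteq> 0" shows "DERIV (phi c) x :> x * exp (c * x)"
proof -
  have "DERIV (\<lambda>x. exp (c * x) * (c * x - 1) + 1) x :> x * exp (c * x) * c^2"
    by (auto intro!: derivative_eq_intros simp: algebra_simps power2_eq_square)
  from DERIV_cdivide[OF this, of "c^2"]
  have "DERIV (\<lambda>x. (exp (c * x) * (c * x - 1) + 1) / c^2) x :> x * exp (c * x) * c^2 / c^2" .
  moreover have "x * exp (c * x) * c^2 / c^2 = x * exp (c * x)" using assms by simp
  ultimately show ?thesis unfolding phi_def[abs_def] by simp
qed

lemma phi_0: "phi c 0 = 0" by (simp add: phi_def)

lemma mgf_bound:
  assumes n: "n \<ge> 2" and c: "8 * norm_A n a > 0" and th: "\<theta> \<ge> 0"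
  shows "(\<Sum>\<pi>\<in>{\<pi>. \<pi> permutes {1..n}}. exp (\<theta> * (perm_stat n a \<pi> - mu_A n a)))
     \<le> real (card {\<pi>. \<pi> permutes {1..n}}) * exp (sigma2_A n a * phi (8 * norm_A n a) \<theta>)"
proof -
  let ?S = "{\<pi>. \<pi> permutes {1..n}}"
  let ?W = "\<lambda>\<pi>. perm_stat n a \<pi> - mu_A n a"
  let ?c = "8 * norm_A n a"
  let ?v = "sigma2_A n a"
  define Z where "Z x = (\<Sum>\<pi>\<in>?S. exp (x * ?W \<pi>))" for x
  define Z' where "Z' x = (\<Sum>\<pi>\<in>?S. ?W \<pi> * exp (x * ?W \<pi>))" for x
  define h where "h x = Z x * exp (- (?v * phi ?c x))" for x
  have dZ: "DERIV Z x :> Z' x" for x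
    unfolding Z_def[abs_def] Z'_def by (auto intro!: derivative_eq_intros simp: mult.commute)
  have dP: "DERIV (\<lambda>x. exp (- (?v * phi ?c x))) x :> exp (- (?v * phi ?c x)) * (- (?v * (x * exp (?c * x))))" for x
    using c by (auto intro!: derivative_eq_intros phi_deriv)
  have "h \<theta> \<le> h 0"
  proof (rule DERIV_nonpos_imp_nonincreasing[of 0 \<theta> h])
    show "0 \<le> \<theta>" by (rule th)
    fix x assume x: "0 \<le> x" "x \<le> \<theta>"
    have D: "DERIV h x :> Z' x * exp (- (?v * phi ?c x)) + (exp (- (?v * phi ?c x)) * (- (?v * (x * exp (?c * x))))) * Z x"
      unfolding h_def[abs_def] by (rule DERIV_mult[OF dZ dP])
    have kb: "Z' x \<le> x * exp (?c * x) * ?v * Z x"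
      unfolding Z'_def Z_def using key_deriv_bound[OF n x(1), of a] by simp
    have "Z' x * exp (- (?v * phi ?c x)) + (exp (- (?v * phi ?c x)) * (- (?v * (x * exp (?c * x))))) * Z x
        = exp (- (?v * phi ?c x)) * (Z' x - x * exp (?c * x) * ?v * Z x)" by (simp add: algebra_simps)
    also have "\<dots> \<le> 0" using kb by (intro mult_nonneg_nonpos) auto
    finally show "\<exists>y. DERIV h x :> y \<and> y \<le> 0" using D by blast
  qed
  moreover have "h 0 = real (card ?S)" by (simp add: h_def Z_def phi_0)
  ultimately have "Z \<theta> * exp (- (?v * phi ?c \<theta>)) \<le> real (card ?S)" by (simp add: h_def)
  hence "Z \<theta> * exp (- (?v * phi ?c \<theta>)) * exp (?v * phi ?c \<theta>) \<le> real (card ?S) * exp (?v * phi ?c \<theta>)"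
    by (rule mult_right_mono) simp
  hence "Z \<theta> \<le> real (card ?S) * exp (?v * phi ?c \<theta>)" by (simp add: mult.assoc exp_minus field_simps)
  thus ?thesis by (simp add: Z_def)
qed

lemma tail_bound:
  assumes n: "n \<ge> 2" and c: "8 * norm_A n a > 0" and th: "\<theta> \<ge> 0"
  shows "measure_pmf.prob (unif_perm n) {\<pi>. perm_stat n a \<pi> - mu_A n a \<ge> t}
     \<le> exp (sigma2_A n a * phi (8 * norm_A n a) \<theta> - \<theta> * t)"
proof -
  let ?S = "{\<pi>. \<pi> permutes {1..n}}"
  let ?W = "\<lambda>\<pi>. perm_stat n a \<pi> - mu_A n a"
  let ?A = "{\<pi>. perm_stat n a \<pi> - mu_A n a \<ge> t}"
  have fin: "finite ?S" using finite_permutations[of "{1..n}"] by simp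
  have "id \<in> ?S" by (simp add: permutes_id)
  hence ne: "?S \<noteq> {}" by blast
  have cS: "real (card ?S) > 0" using fin ne by (simp add: card_gt_0_iff)
  have P: "measure_pmf.prob (unif_perm n) ?A = real (card (?S \<inter> ?A)) / real (card ?S)"
    unfolding unif_perm_def by (rule measure_pmf_of_set[OF ne fin])
  have "real (card (?S \<inter> ?A)) = (\<Sum>\<pi>\<in>?S \<inter> ?A. 1)" by simp
  also have "\<dots> \<le> (\<Sum>\<pi>\<in>?S \<inter> ?A. exp (\<theta> * (?W \<pi> - t)))"
  proof (rule sum_mono)
    fix \<pi> assume "\<pi> \<in> ?S \<inter> ?A"
    hence "0 \<le> \<theta> * (?W \<pi> - t)" using th by auto
    thus "1 \<le> exp (\<theta> * (?W \<pi> - t))" by simp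
  qed
  also have "\<dots> \<le> (\<Sum>\<pi>\<in>?S. exp (\<theta> * (?W \<pi> - t)))"
    by (rule sum_mono2) (use fin in auto)
  also have "\<dots> = exp (- (\<theta> * t)) * (\<Sum>\<pi>\<in>?S. exp (\<theta> * ?W \<pi>))"
    by (simp add: sum_distrib_left exp_add[symmetric] algebra_simps)
  also have "\<dots> \<le> exp (- (\<theta> * t)) * (real (card ?S) * exp (sigma2_A n a * phi (8 * norm_A n a) \<theta>))"
    by (rule mult_left_mono[OF mgf_bound[OF n c th]]) simp
  finally have "real (card (?S \<inter> ?A)) / real (card ?S) \<le> exp (- (\<theta> * t)) * exp (sigma2_A n a * phi (8 * norm_A n a) \<theta>)"
    using cS by (simp add: pos_divide_le_eq algebra_simps)
  thus ?thesis unfolding P by (simp add: exp_add[symmetric])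
qed

lemma bound_gen:
  assumes v: "v > 0" and c: "c > 0" and t: "t \<ge> 0" and D: "D > 0" and k: "k > 0" and w: "w > 0"
    and DD: "k * D = k * w + c * t"
    and L: "\<And>x. 0 \<le> x \<Longrightarrow> x < k \<Longrightarrow> exp x * (x - 1) + 1 \<le> (k * w / (2 * v)) * x^2 / (k - x)"
  shows "v * phi c (t / D) - t / D * t \<le> - (t^2 / (2 * D))"
proof -
  define x where "x = c * t / D"
  have x0: "0 \<le> x" unfolding x_def using c t D by simp
  have kmx: "k - x = k * w / D" unfolding x_def using D DD by (simp add: field_simps)
  have "k * w / D > 0" using k w D by simp
  hence x1: "x < k" using kmx by linarith
  have cth: "c * (t / D) = x" unfolding x_def by simp
  have "phi c (t / D) = (exp x * (x - 1) + 1) / c^2" unfolding phi_def cth ..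
  also have "\<dots> \<le> ((k * w / (2 * v)) * x^2 / (k - x)) / c^2" by (rule divide_right_mono[OF L[OF x0 x1]]) simp
  also have "\<dots> = t^2 / (2 * v * D)"
    unfolding kmx unfolding x_def using c D v k w by (simp add: field_simps power2_eq_square)
  finally have "phi c (t / D) \<le> t^2 / (2 * v * D)" .
  hence "v * phi c (t / D) \<le> v * (t^2 / (2 * v * D))" using v by (intro mult_left_mono) auto
  also have "\<dots> = t^2 / (2 * D)" using v by (simp add: field_simps)
  finally have "v * phi c (t / D) \<le> t^2 / (2 * D)" .
  moreover have "t / D * t = 2 * (t^2 / (2 * D))" using D by (simp add: power2_eq_square field_simps)
  ultimately show ?thesis by linarith
qed

lemma bound1:
  assumes v: "v > 0" and c: "c > 0" and t: "t \<ge> 0"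
  shows "v * phi c (t / (v + c * t)) - t / (v + c * t) * t \<le> - (t^2 / (2 * (v + c * t)))"
proof (rule bound_gen[OF v c t _ zero_less_one v])
  show D: "v + c * t > 0" using v c t by (simp add: add_pos_nonneg)
  show "1 * (v + c * t) = 1 * v + c * t" by simp
  fix x :: real assume x: "0 \<le> x" "x < 1"
  have "exp x * (x - 1) + 1 \<le> x^2 / (2 * (1 - x))" by (rule L1[OF x])
  also have "\<dots> = (1 * v / (2 * v)) * x^2 / (1 - x)" using v by simp
  finally show "exp x * (x - 1) + 1 \<le> (1 * v / (2 * v)) * x^2 / (1 - x)" .
qed

lemma bound2:
  assumes v: "v > 0" and c: "c > 0" and t: "t \<ge> 0"
  shows "v * phi c (t / (5 * v / 3 + c * t / 2)) - t / (5 * v / 3 + c * t / 2) * t \<le> - (t^2 / (10 * v / 3 + c * t))"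
proof -
  have w: "5 * v / 3 > 0" using v by simp
  have "v * phi c (t / (5 * v / 3 + c * t / 2)) - t / (5 * v / 3 + c * t / 2) * t \<le> - (t^2 / (2 * (5 * v / 3 + c * t / 2)))"
  proof (rule bound_gen[OF v c t _ _ w, where k=2])
    show D: "5 * v / 3 + c * t / 2 > 0" using v c t by (simp add: add_pos_nonneg)
    show "(0::real) < 2" by simp
    show "2 * (5 * v / 3 + c * t / 2) = 2 * (5 * v / 3) + c * t" by simp
    fix x :: real assume x: "0 \<le> x" "x < 2"
    have "exp x * (x - 1) + 1 \<le> (5/3) * x^2 / (2 - x)" by (rule L2[OF x])
    also have "\<dots> = (2 * (5 * v / 3) / (2 * v)) * x^2 / (2 - x)" using v by simp
    finally show "exp x * (x - 1) + 1 \<le> (2 * (5 * v / 3) / (2 * v)) * x^2 / (2 - x)" .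
  qed
  moreover have "2 * (5 * v / 3 + c * t / 2) = 10 * v / 3 + c * t" by simp
  ultimately show ?thesis by simp
qed

lemma lnln_facts:
  fixes t :: real
  assumes t: "t > exp 1"
  shows "ln t > 1" "ln (ln t) > 0" "ln (ln t) \<le> ln t / 2"
proof -
  have tp: "t > 0" using t exp_gt_zero[of 1] by linarith
  show l1: "ln t > 1" using t tp by (metis ln_exp ln_less_cancel_iff exp_gt_zero)
  show "ln (ln t) > 0" using l1 by simp
  let ?y = "ln t"
  have yp: "?y > 0" using l1 by simp
  have "ln ?y = 2 * ln (sqrt ?y)" using yp by (simp add: ln_sqrt)
  also have "\<dots> \<le> 2 * (sqrt ?y - 1)" using yp ln_le_minus_one[of "sqrt ?y"] by simp
  also have "\<dots> \<le> ?y / 2"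
  proof -
    have "0 \<le> (sqrt ?y - 2)^2" by simp
    also have "(sqrt ?y - 2)^2 = ?y - 4 * sqrt ?y + 4" using yp by (simp add: power2_eq_square algebra_simps)
    finally show ?thesis by simp
  qed
  finally show "ln (ln t) \<le> ln t / 2" .
qed

lemma bound3:
  fixes t :: real
  assumes v: "v > 0" and c: "c > 0" and t: "t > exp 1"
  shows "v * phi c ((ln t - ln (ln t)) / c) - (ln t - ln (ln t)) / c * t \<le> - (t / c) * (ln t - ln (ln t) - v / c)"
proof -
  note f = lnln_facts[OF t]
  have tp: "t > 0" using t exp_gt_zero[of 1] by linarith
  let ?L = "ln t - ln (ln t)"
  have lp: "ln t > 0" using f by simp
  have eL: "exp ?L = t / ln t" using tp lp by (simp add: exp_diff)
  have cth: "c * (?L / c) = ?L" using c by simp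
  have key: "(t / ln t) * (?L - 1) + 1 \<le> t"
  proof -
    have "(t / ln t) * (?L - 1) \<le> (t / ln t) * (ln t - 1)"
      using f tp lp by (intro mult_left_mono) auto
    also have "\<dots> = t - t / ln t" using lp by (simp add: field_simps)
    finally have A: "(t / ln t) * (?L - 1) \<le> t - t / ln t" .
    have "ln t \<le> t" using ln_le_minus_one[OF tp] by simp
    hence "1 \<le> t / ln t" using lp by (simp add: le_divide_eq)
    thus ?thesis using A by linarith
  qed
  have "phi c (?L / c) = ((t / ln t) * (?L - 1) + 1) / c^2" unfolding phi_def cth eL by (simp add: mult.commute)
  hence "v * phi c (?L / c) \<le> v * (t / c^2)" using key c v
    by (simp add: mult_left_mono divide_right_mono)
  moreover have "- (t / c) * (?L - v / c) = - (?L / c * t) + v * (t / c^2)" using c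
    by (simp add: field_simps power2_eq_square)
  ultimately show ?thesis by linarith
qed

lemma bound3b:
  fixes t :: real
  assumes v: "v > 0" and c: "c > 0" and t: "t > exp 1"
  shows "exp (- (t / c) * (ln t - ln (ln t) - v / c)) \<le> exp (- (t / (2 * c)) * (ln t - 2 * v / c))"
proof -
  note f = lnln_facts[OF t]
  have tp: "t > 0" using t exp_gt_zero[of 1] by linarith
  have "(t / c) * (ln t / 2 - ln (ln t)) \<ge> 0" using f tp c by simp
  moreover have "- (t / c) * (ln t - ln (ln t) - v / c) = - (t / (2 * c)) * (ln t - 2 * v / c) - (t / c) * (ln t / 2 - ln (ln t))"
    using c by (simp add: field_simps)
  ultimately show ?thesis by simp
qed

lemma neg_stats:
  fixes a :: "nat \<Rightarrow> nat \<Rightarrow> real"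
  defines "b \<equiv> \<lambda>i j. - a i j"
  shows "perm_stat n b \<pi> = - perm_stat n a \<pi>" "mu_A n b = - mu_A n a"
    "sigma2_A n b = sigma2_A n a" "norm_A n b = norm_A n a"
proof -
  show "perm_stat n b \<pi> = - perm_stat n a \<pi>" by (simp add: b_def perm_stat_def sum_negf)
  show "mu_A n b = - mu_A n a" by (simp add: b_def mu_A_def tot_mean_def sum_negf)
  have rm: "row_mean n b i = - row_mean n a i" for i by (simp add: b_def row_mean_def sum_negf)
  have cm: "col_mean n b j = - col_mean n a j" for j by (simp add: b_def col_mean_def sum_negf)
  have tm: "tot_mean n b = - tot_mean n a" by (simp add: b_def tot_mean_def sum_negf)
  show "sigma2_A n b = sigma2_A n a"
    unfolding sigma2_A_def rm cm tm
    by (intro arg_cong2[where f="(/)"] sum.cong refl) (simp add: b_def power2_eq_square algebra_simps)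
  show "norm_A n b = norm_A n a"
    unfolding norm_A_def rm by (intro arg_cong[where f=Max]) (auto simp: b_def abs_minus_commute)
qed

lemma norm_pos:
  assumes n: "n \<ge> 3" and s: "sigma2_A n a \<noteq> 0"
  shows "norm_A n a > 0"
proof (rule ccontr)
  assume "\<not> norm_A n a > 0"
  hence z: "norm_A n a \<le> 0" by simp
  have eq: "a i j = row_mean n a i" if "i \<in> {1..n}" "j \<in> {1..n}" for i j
    using norm_bound[OF that, of a] z by simp
  have nz: "real n \<noteq> 0" using n by simp
  have cm: "col_mean n a j = (\<Sum>i=1..n. row_mean n a i) / real n" if "j \<in> {1..n}" for j
    unfolding col_mean_def using that eq by (intro arg_cong2[where f="(/)"] sum.cong refl) auto
  have tm: "tot_mean n a = (\<Sum>i=1..n. row_mean n a i) / real n"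
  proof -
    have "(\<Sum>i=1..n. \<Sum>j=1..n. a i j) = (\<Sum>i=1..n. real n * row_mean n a i)"
      by (intro sum.cong refl) (simp add: row_mean_def nz)
    thus ?thesis unfolding tot_mean_def using nz by (simp add: sum_distrib_left[symmetric] power2_eq_square)
  qed
  have "sigma2_A n a = 0"
    unfolding sigma2_A_def
    by (rule divide_eq_0_iff[THEN iffD2], rule disjI1, intro sum.neutral ballI)
       (auto simp: eq cm tm)
  thus False using s by simp
qed

lemma sigma_pos:
  assumes n: "n \<ge> 3" and s: "sigma2_A n a \<noteq> 0"
  shows "sigma2_A n a > 0"
proof -
  have "sigma2_A n a \<ge> 0" unfolding sigma2_A_def using n by (intro divide_nonneg_pos sum_nonneg) auto
  thus ?thesis using s by simp
qed

theorem theorem3p1: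
  fixes n :: nat and a :: "nat \<Rightarrow> nat \<Rightarrow> real"
  assumes "n \<ge> 3"
    and "sigma2_A n a \<noteq> 0"
  defines "c \<equiv> 8 * norm_A n a"
    and "P \<equiv> \<lambda>t. max (measure_pmf.prob (unif_perm n) {\<pi>. perm_stat n a \<pi> - mu_A n a \<ge> t})
                      (measure_pmf.prob (unif_perm n) {\<pi>. perm_stat n a \<pi> - mu_A n a \<le> - t})"
  shows "(\<forall>t\<ge>0. P t \<le> exp (- (t^2 / (2 * (sigma2_A n a + c * t))))
                 \<and> P t \<le> exp (- (t^2 / (10 * sigma2_A n a / 3 + c * t))))
       \<and> (\<forall>t>exp 1. P t \<le> exp (- (t / c) * (ln t - ln (ln t) - sigma2_A n a / c))
                 \<and> exp (- (t / c) * (ln t - ln (ln t) - sigma2_A n a / c))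
                     \<le> exp (- (t / (2 * c)) * (ln t - 2 * sigma2_A n a / c)))"
proof -
  let ?v = "sigma2_A n a"
  define b where "b = (\<lambda>i j. - a i j)"
  have n2: "n \<ge> 2" using assms(1) by simp
  have cpos: "c > 0" unfolding c_def using norm_pos[OF assms(1,2)] by simp
  have c8: "8 * norm_A n a > 0" using cpos c_def by simp
  have c8b: "8 * norm_A n b > 0" using c8 neg_stats(4)[where a=a and n=n] by (simp add: b_def)
  have vpos: "?v > 0" by (rule sigma_pos[OF assms(1,2)])
  have tail: "P t \<le> exp (?v * phi c \<theta> - \<theta> * t)" if th: "\<theta> \<ge> 0" for t \<theta>
  proof -
    have A: "measure_pmf.prob (unif_perm n) {\<pi>. perm_stat n a \<pi> - mu_A n a \<ge> t} \<le> exp (?v * phi c \<theta> - \<theta> * t)"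
      using tail_bound[OF n2 c8 th, of t] by (simp add: c_def)
    have setB: "{\<pi>. perm_stat n a \<pi> - mu_A n a \<le> - t} = {\<pi>. perm_stat n b \<pi> - mu_A n b \<ge> t}"
      using neg_stats[where a=a and n=n] by (auto simp: b_def)
    have B: "measure_pmf.prob (unif_perm n) {\<pi>. perm_stat n a \<pi> - mu_A n a \<le> - t} \<le> exp (?v * phi c \<theta> - \<theta> * t)"
      unfolding setB using tail_bound[OF n2 c8b th, of t] neg_stats[where a=a and n=n] by (simp add: c_def b_def)
    show ?thesis unfolding P_def using A B by simp
  qed
  show ?thesis
  proof (intro conjI allI impI)
    fix t :: real assume t: "t \<ge> 0"
    have th1: "t / (?v + c * t) \<ge> 0" using t vpos cpos by simp
    show "P t \<le> exp (- (t^2 / (2 * (?v + c * t))))"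
      using tail[OF th1, of t] bound1[OF vpos cpos t] by (meson exp_le_cancel_iff order_trans)
    have th2: "t / (5 * ?v / 3 + c * t / 2) \<ge> 0" using t vpos cpos by simp
    show "P t \<le> exp (- (t^2 / (10 * ?v / 3 + c * t)))"
      using tail[OF th2, of t] bound2[OF vpos cpos t] by (meson exp_le_cancel_iff order_trans)
  next
    fix t :: real assume t: "t > exp 1"
    note f = lnln_facts[OF t]
    have th3: "(ln t - ln (ln t)) / c \<ge> 0" using f cpos by simp
    show "P t \<le> exp (- (t / c) * (ln t - ln (ln t) - ?v / c))"
      using tail[OF th3, of t] bound3[OF vpos cpos t] by (meson exp_le_cancel_iff order_trans)
    show "exp (- (t / c) * (ln t - ln (ln t) - ?v / c)) \<le> exp (- (t / (2 * c)) * (ln t - 2 * ?v / c))"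
      by (rule bound3b[OF vpos cpos t])
  qed
qed

end
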